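(* Let $\Sigma \subseteq \Sigma'$ be vocabularies and let $T$ and $T'$ be $\Sigma$-equivalent theories over $\Sigma$ and $\Sigma'$ respectively. Let $O'$ be an operator on four-valued $\Sigma'$-structures and define the operator $O$ on four-valued $\Sigma$-structures by $O(\tilde I) = O'(\tilde I + \bot_{\Sigma'\setminus\Sigma})|_{\Sigma}$. If $O'$ is a propagator for $T'$, then $O$ is a propagator for $T$. If $O'$ is monotone, then $O$ is monotone as well.
   Context: Vocabularies are finite sets of predicate symbols. Truth values $\mathbf{t},\mathbf{f},\mathbf{u},\mathbf{i}$ with precision order $\mathbf{u} \le_p \mathbf{t} \le_p \mathbf{i}$, $\mathbf{u} \le_p \mathbf{f} \le_p \mathbf{i}$ ($\mathbf{t},\mathbf{f}$ incomparable). A four-valued $\Sigma$-structure $\tilde I$ has domain $D$ and assigns to each $P/n\in\Sigma$ a function $P^{\tilde I}:D^n\to\{\mathbf{t},\mathbf{f},\mathbf{u},\mathbf{i}\}$; two-valued structures (only $\mathbf{t},\mathbf{f}$) are identified with ordinary structures. $\tilde I \le_p \tilde J$ (same domain) iff pointwise $\le_p$. $\tilde I|_{\Sigma_0}$ is the restriction to $\Sigma_0\subseteq\Sigma$. For disjoint vocabularies $\Sigma_1,\Sigma_2$ and structures $\tilde I$ over $\Sigma_1$, $\tilde J$ over $\Sigma_2$ with the same domain, $\tilde I+\tilde J$ is the $(\Sigma_1\cup\Sigma_2)$-structure restricting to $\tilde I$ and $\tilde J$. $\bot_{\Sigma_0}$ denotes the $\Sigma_0$-structure (with the relevant domain) assigning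 $\mathbf{u}$ to every domain atom. A propagator for a theory $T$ over $\Sigma$ is a map $O$ on four-valued $\Sigma$-structures with (i) $\tilde I\le_p O(\tilde I)$ and (ii) $O(\tilde I)\le_p M$ for every two-valued model $M$ of $T$ with $\tilde I\le_p M$. An operator $O$ is monotone if $\tilde I\le_p\tilde J$ implies $O(\tilde I)\le_p O(\tilde J)$. Theories $T$ over $\Sigma_1$ and $T'$ over $\Sigma_2$, with $\Sigma\subseteq\Sigma_1\cap\Sigma_2$, are $\Sigma$-equivalent if for every two-valued $\Sigma$-structure $I$, $I$ has an expansion to $\Sigma_1$ satisfying $T$ iff $I$ has an expansion to $\Sigma_2$ satisfying $T'$. *)

theory Defs
  imports Main
begin

datatype tv = Tv | Fv | Uv | Iv

definition leq_tv :: "tv \<Rightarrow> tv \<Rightarrow> bool" where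
  "leq_tv x y \<longleftrightarrow> x = Uv \<or> y = Iv \<or> x = y"

text \<open>To make structures over a
  vocabulary canonical, all non-atoms (symbols outside the vocabulary, wrong-length
  tuples, tuples leaving D) are sent to Uv.\<close>
type_synonym ('p, 'd) str = "'d set \<times> ('p \<Rightarrow> 'd list \<Rightarrow> tv)"

definition is_atom :: "('p \<Rightarrow> nat) \<Rightarrow> 'p set \<Rightarrow> 'd set \<Rightarrow> 'p \<Rightarrow> 'd list \<Rightarrow> bool" where
  "is_atom ar \<Sigma> D P xs \<longleftrightarrow> P \<in> \<Sigma> \<and> length xs = ar P \<and> set xs \<subseteq> D"

definition wf_str :: "('p \<Rightarrow> nat) \<Rightarrow> 'p set \<Rightarrow> ('p, 'd) str \<Rightarrow> bool" where
  "wf_str ar \<Sigma> I \<longleftrightarrow> fst I \<noteq> {} \<and>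
     (\<forall>P xs. \<not> is_atom ar \<Sigma> (fst I) P xs \<longrightarrow> snd I P xs = Uv)"

definition two_valued :: "('p \<Rightarrow> nat) \<Rightarrow> 'p set \<Rightarrow> ('p, 'd) str \<Rightarrow> bool" where
  "two_valued ar \<Sigma> I \<longleftrightarrow>
     (\<forall>P xs. is_atom ar \<Sigma> (fst I) P xs \<longrightarrow> snd I P xs \<in> {Tv, Fv})"

definition leq_p :: "('p, 'd) str \<Rightarrow> ('p, 'd) str \<Rightarrow> bool" where
  "leq_p I J \<longleftrightarrow> fst I = fst J \<and> (\<forall>P xs. leq_tv (snd I P xs) (snd J P xs))"

definition restr :: "'p set \<Rightarrow> ('p, 'd) str \<Rightarrow> ('p, 'd) str" where
  "restr \<Sigma>0 I = (fst I, \<lambda>P xs. if P \<in> \<Sigma>0 then snd I P xs else Uv)"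

definition plus_str :: "'p set \<Rightarrow> ('p, 'd) str \<Rightarrow> ('p, 'd) str \<Rightarrow> ('p, 'd) str" where
  "plus_str \<Sigma>1 I J = (fst I, \<lambda>P xs. if P \<in> \<Sigma>1 then snd I P xs else snd J P xs)"

definition bot_str :: "'d set \<Rightarrow> ('p, 'd) str" where
  "bot_str D = (D, \<lambda>P xs. Uv)"

text \<open>A theory over \<Sigma> is represented by its class of (two-valued) models:
  M satisfies T iff M \<in> T.\<close>
definition sigma_equivalent ::
  "('p \<Rightarrow> nat) \<Rightarrow> 'p set \<Rightarrow> 'p set \<Rightarrow> ('p, 'd) str set \<Rightarrow> 'p set \<Rightarrow> ('p, 'd) str set \<Rightarrow> bool" where
  "sigma_equivalent ar \<Sigma> \<Sigma>1 T \<Sigma>2 T' \<longleftrightarrow>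
     (\<forall>I. wf_str ar \<Sigma> I \<and> two_valued ar \<Sigma> I \<longrightarrow>
        ((\<exists>M. wf_str ar \<Sigma>1 M \<and> two_valued ar \<Sigma>1 M \<and> restr \<Sigma> M = I \<and> M \<in> T) \<longleftrightarrow>
         (\<exists>M. wf_str ar \<Sigma>2 M \<and> two_valued ar \<Sigma>2 M \<and> restr \<Sigma> M = I \<and> M \<in> T')))"

definition propagator ::
  "('p \<Rightarrow> nat) \<Rightarrow> 'p set \<Rightarrow> ('p, 'd) str set \<Rightarrow> (('p, 'd) str \<Rightarrow> ('p, 'd) str) \<Rightarrow> bool" where
  "propagator ar \<Sigma> T Op \<longleftrightarrow>
     (\<forall>I. wf_str ar \<Sigma> I \<longrightarrow>
        leq_p I (Op I) \<and>
        (\<forall>M. wf_str ar \<Sigma> M \<and> two_valued ar \<Sigma> M \<and> M \<in> T \<and> leq_p I M \<longrightarrow> leq_p (Op I) M))"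

definition monotone_op ::
  "('p \<Rightarrow> nat) \<Rightarrow> 'p set \<Rightarrow> (('p, 'd) str \<Rightarrow> ('p, 'd) str) \<Rightarrow> bool" where
  "monotone_op ar \<Sigma> Op \<longleftrightarrow>
     (\<forall>I J. wf_str ar \<Sigma> I \<and> wf_str ar \<Sigma> J \<and> leq_p I J \<longrightarrow> leq_p (Op I) (Op J))"

end

theory Submission
  imports Defs
begin

lemma plus_bot_id:
  assumes "wf_str ar \<Sigma> I"
  shows "plus_str \<Sigma> I (bot_str (fst I)) = I"
proof -
  have "(\<lambda>P xs. if P \<in> \<Sigma> then snd I P xs else Uv) = snd I"
    using assms unfolding wf_str_def is_atom_def by (intro ext) auto
  then show ?thesis unfolding plus_str_def bot_str_def by (simp only: snd_conv prod.collapse)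
qed

lemma restr_id:
  assumes "wf_str ar \<Sigma> I"
  shows "restr \<Sigma> I = I"
proof -
  have "(\<lambda>P xs. if P \<in> \<Sigma> then snd I P xs else Uv) = snd I"
    using assms unfolding wf_str_def is_atom_def by (intro ext) auto
  then show ?thesis unfolding restr_def by (simp add: prod_eq_iff)
qed

lemma wf_mono:
  assumes "wf_str ar \<Sigma> I" "\<Sigma> \<subseteq> \<Sigma>'"
  shows "wf_str ar \<Sigma>' I"
  using assms by (auto simp: wf_str_def is_atom_def)

lemma leq_tv_refl: "leq_tv x x" by (simp add: leq_tv_def)

lemma restr_leq: "leq_p I J \<Longrightarrow> leq_p (restr S I) (restr S J)"
  by (auto simp: leq_p_def restr_def leq_tv_def)

theorem proposition3p3:
  fixes ar :: "'p \<Rightarrow> nat"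
    and \<Sigma> \<Sigma>' :: "'p set"
    and T T' :: "('p, 'd) str set"
    and O' Op :: "('p, 'd) str \<Rightarrow> ('p, 'd) str"
  assumes "finite \<Sigma>'" and "\<Sigma> \<subseteq> \<Sigma>'"
    and "sigma_equivalent ar \<Sigma> \<Sigma> T \<Sigma>' T'"
    and "\<And>I. Op I = restr \<Sigma> (O' (plus_str \<Sigma> I (bot_str (fst I))))"
  shows "(propagator ar \<Sigma>' T' O' \<longrightarrow> propagator ar \<Sigma> T Op)
       \<and> (monotone_op ar \<Sigma>' O' \<longrightarrow> monotone_op ar \<Sigma> Op)"
proof (intro conjI impI)
  have OpI: "Op I = restr \<Sigma> (O' I)" if "wf_str ar \<Sigma> I" for I :: "('p, 'd) str"
    using assms(4) plus_bot_id[OF that] by simp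
  assume P: "propagator ar \<Sigma>' T' O'"
  show "propagator ar \<Sigma> T Op"
    unfolding propagator_def
  proof (intro allI impI conjI)
    fix I :: "('p, 'd) str" assume wI: "wf_str ar \<Sigma> I"
    have wI': "wf_str ar \<Sigma>' I" using wf_mono[OF wI assms(2)] .
    have l1: "leq_p I (O' I)" using P wI' unfolding propagator_def by blast
    show "leq_p I (Op I)"
      using restr_leq[OF l1, of \<Sigma>] restr_id[OF wI] OpI[OF wI] by simp
    fix M :: "('p, 'd) str" assume H: "wf_str ar \<Sigma> M \<and> two_valued ar \<Sigma> M \<and> M \<in> T \<and> leq_p I M"
    have "\<exists>M'. wf_str ar \<Sigma>' M' \<and> two_valued ar \<Sigma>' M' \<and> restr \<Sigma> M' = M \<and> M' \<in> T'"
      using assms(3) H restr_id[of ar \<Sigma> M] unfolding sigma_equivalent_def by blast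
    then obtain M' where M': "wf_str ar \<Sigma>' M'" "two_valued ar \<Sigma>' M'"
      "restr \<Sigma> M' = M" "M' \<in> T'" by blast
    have "leq_p I M'"
    proof -
      have f: "fst M' = fst I" using M'(3) H by (auto simp: restr_def leq_p_def)
      have "leq_tv (snd I P xs) (snd M' P xs)" for P xs
      proof (cases "P \<in> \<Sigma>")
        case True
        then have "snd M P xs = snd M' P xs" using M'(3) by (auto simp: restr_def)
        then show ?thesis using H unfolding leq_p_def by metis
      next
        case False
        then have "snd I P xs = Uv" using wI by (auto simp: wf_str_def is_atom_def)
        then show ?thesis by (simp add: leq_tv_def)
      qed
      then show ?thesis using f by (simp add: leq_p_def)
    qed
    then have "leq_p (O' I) M'" using P wI' M' unfolding propagator_def by blast
    then have "leq_p (restr \<Sigma> (O' I)) (restr \<Sigma> M')" by (rule restr_leq)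
    then show "leq_p (Op I) M" using M'(3) OpI[OF wI] by simp
  qed
next
  have OpI: "Op I = restr \<Sigma> (O' I)" if "wf_str ar \<Sigma> I" for I :: "('p, 'd) str"
    using assms(4) plus_bot_id[OF that] by simp
  assume "monotone_op ar \<Sigma>' O'"
  then show "monotone_op ar \<Sigma> Op"
    unfolding monotone_op_def
  proof (intro allI impI)
    fix I J :: "('p, 'd) str" assume H: "wf_str ar \<Sigma> I \<and> wf_str ar \<Sigma> J \<and> leq_p I J"
    then have "leq_p (O' I) (O' J)" using \<open>monotone_op ar \<Sigma>' O'\<close> wf_mono[OF _ assms(2)]
      unfolding monotone_op_def by blast
    then show "leq_p (Op I) (Op J)" using OpI H restr_leq by simp
  qed
qed

end
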